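(* Suppose $(B,b)$ is a type (2) Whitehead automorphism and $a\in L$ satisfies $a\ge b$ and $a,a^{-1}\notin B$. Suppose $[u]$ is an element or a conjugacy class of $A_\Gamma$ with $\bar b\notin\mathrm{supp}[u]$, and $v$ is a graphically reduced word (respectively cyclic word) representing $(B,b)([u])$. Let $v'$ be obtained from $v$ by replacing every occurrence of $b$ by $a$ and every occurrence of $b^{-1}$ by $a^{-1}$. Then $v'$ represents $((B\setminus\{b\})\cup\{a\},a)([u])$.
   Context: $\Gamma$ is a finite simplicial graph with vertex set $X$, $A_\Gamma$ its right-angled Artin group, $L=X\cup X^{-1}$, $\bar u$ the vertex of a letter $u$, $\mathrm{lk}(v)$ neighbours, $\mathrm{st}(v)=\mathrm{lk}(v)\cup\{v\}$; domination $v\ge w$ iff $\mathrm{lk}(w)\subset\mathrm{st}(v)$, extended to letters via vertices. For $a\in A\subset L$ with $a^{-1}\notin A$, $(A,a)$ denotes the map fixing $a$ and sending $x\in L\setminus\{a^{\pm1}\}$ to $a^{-\epsilon}xa^{\delta}$ where $\delta=1$ if $x\in A$ (else $0$) and $\epsilon=1$ if $x^{-1}\in A$ (else $0$); a type (2) Whitehead automorphism is such a map that is an automorphism of $A_\Gamma$. Under the hypotheses of the claim, $((B\setminus\{b\})\cup\{a\},a)$ is also a well-defined automorphism. A word (cyclic word) is graphically reduced if it has minimal length among words representing the same element (conjugacy class). The support of an element/conjugacy class is the set of vertices occurring in a graphically reduced representative. *)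

theory Defs
  imports Main
begin

text \<open>A letter is a pair (vertex, sign); (x,True) is x, (x,False) is x^-1.\<close>
type_synonym 'v letter = "'v \<times> bool"
type_synonym 'v word = "'v letter list"

definition letters :: "'v set \<Rightarrow> 'v letter set" where
  "letters X = X \<times> UNIV"

definition linv :: "'v letter \<Rightarrow> 'v letter" where
  "linv x = (fst x, \<not> snd x)"

definition winv :: "'v word \<Rightarrow> 'v word" where
  "winv w = rev (map linv w)"

definition simplicial_graph :: "'v set \<Rightarrow> ('v \<Rightarrow> 'v \<Rightarrow> bool) \<Rightarrow> bool" where
  "simplicial_graph X E \<longleftrightarrow> finite X \<and> (\<forall>x y. E x y \<longrightarrow> x \<in> X \<and> y \<in> X)
     \<and> (\<forall>x y. E x y \<longrightarrow> E y x) \<and> (\<forall>x. \<not> E x x)"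

inductive raag_eq :: "('v \<Rightarrow> 'v \<Rightarrow> bool) \<Rightarrow> 'v word \<Rightarrow> 'v word \<Rightarrow> bool" for E where
  refl: "raag_eq E w w"
| sym: "raag_eq E w w' \<Longrightarrow> raag_eq E w' w"
| trans: "raag_eq E w1 w2 \<Longrightarrow> raag_eq E w2 w3 \<Longrightarrow> raag_eq E w1 w3"
| cancel: "raag_eq E (u @ [x, linv x] @ w) (u @ w)"
| commute: "E (fst x) (fst y) \<Longrightarrow> raag_eq E (u @ [x, y] @ w) (u @ [y, x] @ w)"

definition raag_conj :: "'v set \<Rightarrow> ('v \<Rightarrow> 'v \<Rightarrow> bool) \<Rightarrow> 'v word \<Rightarrow> 'v word \<Rightarrow> bool" where
  "raag_conj X E w1 w2 \<longleftrightarrow> (\<exists>g \<in> lists (letters X). raag_eq E (g @ w1 @ winv g) w2)"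

definition graph_reduced :: "'v set \<Rightarrow> ('v \<Rightarrow> 'v \<Rightarrow> bool) \<Rightarrow> 'v word \<Rightarrow> bool" where
  "graph_reduced X E w \<longleftrightarrow> w \<in> lists (letters X) \<and>
     (\<forall>w' \<in> lists (letters X). raag_eq E w w' \<longrightarrow> length w \<le> length w')"

definition cyc_reduced :: "'v set \<Rightarrow> ('v \<Rightarrow> 'v \<Rightarrow> bool) \<Rightarrow> 'v word \<Rightarrow> bool" where
  "cyc_reduced X E w \<longleftrightarrow> w \<in> lists (letters X) \<and>
     (\<forall>w' \<in> lists (letters X). raag_conj X E w w' \<longrightarrow> length w \<le> length w')"

definition supp_elem :: "'v set \<Rightarrow> ('v \<Rightarrow> 'v \<Rightarrow> bool) \<Rightarrow> 'v word \<Rightarrow> 'v set" where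
  "supp_elem X E u = fst ` set (SOME w. graph_reduced X E w \<and> raag_eq E w u)"

definition supp_conj :: "'v set \<Rightarrow> ('v \<Rightarrow> 'v \<Rightarrow> bool) \<Rightarrow> 'v word \<Rightarrow> 'v set" where
  "supp_conj X E u = fst ` set (SOME w. cyc_reduced X E w \<and> raag_conj X E w u)"

definition lk :: "'v set \<Rightarrow> ('v \<Rightarrow> 'v \<Rightarrow> bool) \<Rightarrow> 'v \<Rightarrow> 'v set" where
  "lk X E v = {w \<in> X. E v w}"

definition st :: "'v set \<Rightarrow> ('v \<Rightarrow> 'v \<Rightarrow> bool) \<Rightarrow> 'v \<Rightarrow> 'v set" where
  "st X E v = insert v (lk X E v)"

definition dominates :: "'v set \<Rightarrow> ('v \<Rightarrow> 'v \<Rightarrow> bool) \<Rightarrow> 'v letter \<Rightarrow> 'v letter \<Rightarrow> bool" where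
  "dominates X E a b \<longleftrightarrow> lk X E (fst b) \<subseteq> st X E (fst a)"

definition wh_letter :: "'v letter set \<Rightarrow> 'v letter \<Rightarrow> 'v letter \<Rightarrow> 'v word" where
  "wh_letter A a x = (if x = a \<or> x = linv a then [x]
     else (if linv x \<in> A then [linv a] else []) @ [x] @ (if x \<in> A then [a] else []))"

definition wh :: "'v letter set \<Rightarrow> 'v letter \<Rightarrow> 'v word \<Rightarrow> 'v word" where
  "wh A a w = concat (map (wh_letter A a) w)"

definition is_raag_aut :: "'v set \<Rightarrow> ('v \<Rightarrow> 'v \<Rightarrow> bool) \<Rightarrow> ('v word \<Rightarrow> 'v word) \<Rightarrow> bool" where
  "is_raag_aut X E f \<longleftrightarrow>
     (\<forall>w \<in> lists (letters X). f w \<in> lists (letters X)) \<and>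
     (\<forall>w1 \<in> lists (letters X). \<forall>w2 \<in> lists (letters X). raag_eq E w1 w2 \<longrightarrow> raag_eq E (f w1) (f w2)) \<and>
     (\<forall>w1 \<in> lists (letters X). \<forall>w2 \<in> lists (letters X). raag_eq E (f w1) (f w2) \<longrightarrow> raag_eq E w1 w2) \<and>
     (\<forall>w \<in> lists (letters X). \<exists>w' \<in> lists (letters X). raag_eq E (f w') w)"

definition whitehead2 :: "'v set \<Rightarrow> ('v \<Rightarrow> 'v \<Rightarrow> bool) \<Rightarrow> 'v letter set \<Rightarrow> 'v letter \<Rightarrow> bool" where
  "whitehead2 X E A a \<longleftrightarrow> A \<subseteq> letters X \<and> a \<in> A \<and> linv a \<notin> A \<and> is_raag_aut X E (wh A a)"

definition repl :: "'v letter \<Rightarrow> 'v letter \<Rightarrow> 'v word \<Rightarrow> 'v word" where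
  "repl b a w = map (\<lambda>x. if x = b then a else if x = linv b then linv a else x) w"

end

theory Submission imports Defs begin

lemma linv_linv[simp]: "linv (linv x) = x" by (simp add: linv_def)
lemma linv_fst[simp]: "fst (linv x) = fst x" by (simp add: linv_def)
lemma linv_neq[simp]: "linv x \<noteq> x" "x \<noteq> linv x" by (auto simp: linv_def prod_eq_iff)
lemma linv_eq_iff[simp]: "linv x = linv y \<longleftrightarrow> x = y" by (metis linv_linv)
lemma winv_Nil[simp]: "winv [] = []" by (simp add: winv_def)
lemma winv_Cons[simp]: "winv (x#p) = winv p @ [linv x]" by (simp add: winv_def)
lemma winv_app[simp]: "winv (p@q) = winv q @ winv p" by (simp add: winv_def)
lemma winv_winv[simp]: "winv (winv p) = p" by (simp add: winv_def rev_map comp_def)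

lemma req_cong: "raag_eq E w w' \<Longrightarrow> raag_eq E (p@w@q) (p@w'@q)"
proof (induction rule: raag_eq.induct)
  case (refl w) then show ?case by (rule raag_eq.refl)
next
  case (sym w w') then show ?case by (blast intro: raag_eq.sym)
next
  case (trans w1 w2 w3) then show ?case by (metis raag_eq.trans)
next
  case (cancel u x w) then show ?case using raag_eq.cancel[of E "p@u" x "w@q"] by simp
next
  case (commute x y u w) then show ?case using raag_eq.commute[of E x y "p@u" "w@q"] by simp
qed

lemma req_app: "raag_eq E w1 w1' \<Longrightarrow> raag_eq E w2 w2' \<Longrightarrow> raag_eq E (w1@w2) (w1'@w2')"
  using req_cong[of E w1 w1' "[]" w2] req_cong[of E w2 w2' w1' "[]"]
  by (auto intro: raag_eq.trans)

lemma req_inv_r: "raag_eq E (p @ winv p) []"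
proof (induction p)
  case Nil then show ?case by (simp add: raag_eq.refl)
next
  case (Cons x p)
  have "raag_eq E ([x] @ (p @ winv p) @ [linv x]) ([x] @ [] @ [linv x])"
    by (rule req_cong[OF Cons])
  moreover have "raag_eq E ([] @ [x, linv x] @ []) ([] @ [])" by (rule raag_eq.cancel)
  ultimately show ?case by (auto intro: raag_eq.trans)
qed

lemma req_inv_l: "raag_eq E (winv p @ p) []"
  using req_inv_r[of E "winv p"] by simp

lemma req_lcancel: "raag_eq E (p@q) (p@r) \<Longrightarrow> raag_eq E q r"
proof -
  assume h: "raag_eq E (p@q) (p@r)"
  have "raag_eq E (winv p @ (p@q) @ []) (winv p @ (p@r) @ [])" by (rule req_cong[OF h])
  moreover have "raag_eq E ([] @ (winv p @ p) @ q) ([] @ [] @ q)" by (rule req_cong[OF req_inv_l])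
  moreover have "raag_eq E ([] @ (winv p @ p) @ r) ([] @ [] @ r)" by (rule req_cong[OF req_inv_l])
  ultimately show ?thesis by simp (metis raag_eq.sym raag_eq.trans)
qed

definition comm :: "('v \<Rightarrow> 'v \<Rightarrow> bool) \<Rightarrow> 'v word \<Rightarrow> 'v word \<Rightarrow> bool" where
  "comm E p q \<longleftrightarrow> raag_eq E (p@q) (q@p)"

lemma comm_sym: "comm E p q \<Longrightarrow> comm E q p"
  by (simp add: comm_def raag_eq.sym)

lemma comm_Nil[simp]: "comm E p []" by (simp add: comm_def raag_eq.refl)

lemma comm_app: "comm E p q1 \<Longrightarrow> comm E p q2 \<Longrightarrow> comm E p (q1@q2)"
proof -
  assume h1: "comm E p q1" and h2: "comm E p q2"
  have "raag_eq E ((p@q1)@q2) ((q1@p)@q2)" using req_cong[of E "p@q1" "q1@p" "[]" q2] h1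
    by (simp add: comm_def)
  moreover have "raag_eq E (q1@(p@q2)@[]) (q1@(q2@p)@[])" using h2 by (intro req_cong) (simp add: comm_def)
  ultimately show ?thesis unfolding comm_def by simp (metis raag_eq.trans)
qed

lemma comm_cong: "raag_eq E q q' \<Longrightarrow> comm E p q \<Longrightarrow> comm E p q'"
proof -
  assume h: "raag_eq E q q'" and c: "comm E p q"
  have "raag_eq E (p@q) (p@q')" using req_cong[OF h, of p "[]"] by simp
  moreover have "raag_eq E (q@p) (q'@p)" using req_cong[OF h, of "[]" p] by simp
  ultimately show ?thesis using c unfolding comm_def by (metis raag_eq.sym raag_eq.trans)
qed

lemma comm_cancel: "comm E r (s@t) \<Longrightarrow> comm E r s \<Longrightarrow> comm E r t"
proof -
  assume h1: "comm E r (s@t)" and h2: "comm E r s"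
  have a: "raag_eq E (r@s@t) (s@t@r)" using h1 by (simp add: comm_def)
  have "raag_eq E ((r@s)@t) ((s@r)@t)" using req_cong[of E "r@s" "s@r" "[]" t] h2 by (simp add: comm_def)
  hence "raag_eq E (s@r@t) (s@t@r)" using a by simp (metis raag_eq.sym raag_eq.trans)
  thus ?thesis unfolding comm_def by (rule req_lcancel)
qed

lemma comm_inv: "comm E p q \<Longrightarrow> comm E p (winv q)"
proof -
  assume c: "comm E p q"
  have "comm E p (q @ winv q)"
    by (rule comm_cong[OF raag_eq.sym[OF req_inv_r]]) simp
  thus ?thesis using comm_cancel c by blast
qed

lemma comm_E: "E (fst x) (fst y) \<Longrightarrow> comm E [x] [y]"
  using raag_eq.commute[of E x y "[]" "[]"] by (simp add: comm_def)

lemma comm_same: "fst x = fst y \<Longrightarrow> comm E [x] [y]"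
proof -
  assume "fst x = fst y"
  then have "y = x \<or> y = linv x" by (cases x, cases y) (auto simp: linv_def)
  then show ?thesis
  proof
    assume "y = x" thus ?thesis by (simp add: comm_def raag_eq.refl)
  next
    assume y: "y = linv x"
    have "raag_eq E ([x] @ [y]) []" using raag_eq.cancel[of E "[]" x "[]"] y by simp
    moreover have "raag_eq E ([y] @ [x]) []" using raag_eq.cancel[of E "[]" y "[]"] y by simp
    ultimately show ?thesis unfolding comm_def by (metis raag_eq.sym raag_eq.trans)
  qed
qed

lemma hom_resp:
  assumes c: "\<And>x y. E (fst x) (fst y) \<Longrightarrow> comm E (F x) (F y)"
    and i: "\<And>x. F (linv x) = winv (F x)"
  shows "raag_eq E w w' \<Longrightarrow> raag_eq E (concat (map F w)) (concat (map F w'))"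
proof (induction rule: raag_eq.induct)
  case (refl w) then show ?case by (rule raag_eq.refl)
next
  case (sym w w') then show ?case by (blast intro: raag_eq.sym)
next
  case (trans w1 w2 w3) then show ?case by (metis raag_eq.trans)
next
  case (cancel u x w) then show ?case
    using req_cong[OF req_inv_r[of E "F x"], of "concat (map F u)" "concat (map F w)"] by (simp add: i)
next
  case (commute x y u w) then show ?case
    using req_cong[of E "F x @ F y" "F y @ F x" "concat (map F u)" "concat (map F w)"] c[OF commute]
    by (simp add: comm_def)
qed

lemma wh_letter_inv: "wh_letter A a (linv x) = winv (wh_letter A a x)"
  by (auto simp: wh_letter_def)


definition rl :: "'v letter \<Rightarrow> 'v letter \<Rightarrow> 'v letter \<Rightarrow> 'v letter" where
  "rl b a x = (if x = b then a else if x = linv b then linv a else x)"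

lemma repl_concat: "repl b a w = concat (map (\<lambda>x. [rl b a x]) w)"
  by (induction w) (auto simp: repl_def rl_def)

lemma wh_concat: "wh A a w = concat (map (wh_letter A a) w)" by (simp add: wh_def)

lemma rl_inv: "rl b a (linv x) = linv (rl b a x)"
  by (auto simp: rl_def)

lemma repl_resp:
  fixes X :: "'v set" and a b :: "'v letter"
  assumes sg: "simplicial_graph X E" and dom: "dominates X E a b"
    and h: "raag_eq E w w'"
  shows "raag_eq E (repl b a w) (repl b a w')"
  unfolding repl_concat
proof (rule hom_resp[OF _ _ h])
  fix x :: "'v letter" show "[rl b a (linv x)] = winv [rl b a x]" by (simp add: rl_inv)
next
  fix x y :: "'v letter" assume e: "E (fst x) (fst y)"
  have sy: "E (fst y) (fst x)" using sg e by (simp add: simplicial_graph_def)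
  have ne: "fst x \<noteq> fst y" using sg e by (auto simp: simplicial_graph_def)
  have key: "comm E [rl b a x] [rl b a y]" if e: "E (fst x) (fst y)" and xb: "fst x = fst b" for x y
  proof -
    have ny: "fst y \<noteq> fst b" using sg e xb by (auto simp: simplicial_graph_def)
    hence ry: "rl b a y = y" by (auto simp: rl_def)
    have rx: "fst (rl b a x) = fst a" using xb by (cases x, cases b) (auto simp: rl_def linv_def)
    have "fst y \<in> lk X E (fst b)" using sg e xb by (auto simp: lk_def simplicial_graph_def)
    hence "fst y \<in> st X E (fst a)" using dom by (auto simp: dominates_def)
    hence "fst y = fst a \<or> E (fst a) (fst y)" by (auto simp: st_def lk_def)
    thus ?thesis using comm_same[of "rl b a x" y E] comm_E[of E "rl b a x" y] rx ry by auto
  qed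
  show "comm E [rl b a x] [rl b a y]"
  proof (cases "fst x = fst b")
    case True thus ?thesis using key e by blast
  next
    case False note fx = False
    show ?thesis
    proof (cases "fst y = fst b")
      case True thus ?thesis using key[OF sy] by (blast intro: comm_sym)
    next
      case False
      hence "rl b a x = x" "rl b a y = y" using fx by (auto simp: rl_def)
      thus ?thesis using comm_E[of E x y] e by simp
    qed
  qed
qed

lemma g_letter:
  assumes "x \<noteq> b" "x \<noteq> linv b" "a \<noteq> b" "a \<noteq> linv b" "a \<notin> B" "linv a \<notin> B"
  shows "wh_letter ((B - {b}) \<union> {a}) a x = map (rl b a) (wh_letter B b x)"
  using assms by (auto simp: wh_letter_def rl_def)


lemma repl_rl: "repl b a w = map (rl b a) w" by (simp add: repl_def rl_def)

lemma same_fst: "fst x = fst y \<Longrightarrow> y = x \<or> y = linv x"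
  by (cases x, cases y) (auto simp: linv_def)

lemma g_comm:
  fixes X :: "'v set" and a b :: "'v letter"
  assumes sg: "simplicial_graph X E" and wh2: "whitehead2 X E B b"
    and aX: "a \<in> letters X" and dom: "dominates X E a b"
    and aB: "a \<notin> B" and aB': "linv a \<notin> B"
    and e: "E (fst x) (fst y)"
  shows "comm E (wh_letter ((B - {b}) \<union> {a}) a x) (wh_letter ((B - {b}) \<union> {a}) a y)"
proof -
  let ?B' = "(B - {b}) \<union> {a}"
  let ?f = "wh_letter B b" and ?g = "wh_letter ?B' a"
  have bB: "b \<in> B" and BX: "B \<subseteq> letters X" and bB': "linv b \<notin> B"
    and aut: "is_raag_aut X E (wh B b)" using wh2 by (auto simp: whitehead2_def)
  have ab: "a \<noteq> b" "a \<noteq> linv b" using aB bB aB' by auto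
  have inX: "\<And>x y. E (fst x) (fst y) \<Longrightarrow> x \<in> letters X \<and> y \<in> letters X"
    using sg by (auto simp: simplicial_graph_def letters_def mem_Times_iff)
  have Esym: "\<And>x y. E x y \<Longrightarrow> E y x" using sg by (auto simp: simplicial_graph_def)
  have Eirr: "\<And>x y. E x y \<Longrightarrow> x \<noteq> y" using sg by (auto simp: simplicial_graph_def)
  have fcomm: "comm E (?f x) (?f y)" if e: "E (fst x) (fst y)" for x y
  proof -
    have "[x,y] \<in> lists (letters X)" "[y,x] \<in> lists (letters X)" using inX[OF e] by auto
    moreover have "raag_eq E [x,y] [y,x]" using raag_eq.commute[of E x y "[]" "[]"] e by simp
    ultimately have "raag_eq E (wh B b [x,y]) (wh B b [y,x])" using aut
      unfolding is_raag_aut_def by blast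
    thus ?thesis by (simp add: comm_def wh_def)
  qed
  have fa: "?f a = [a]" using aB aB' ab by (auto simp: wh_letter_def)
  have gb: "?g b = [b]" "?g (linv b) = [linv b]" using ab bB' by (auto simp: wh_letter_def)
  have gf: "?g z = map (rl b a) (?f z)" if "z \<noteq> b" "z \<noteq> linv b" for z
    using g_letter[OF that ab aB aB'] .
  have kb: "comm E [b] (?g y)" if e: "E (fst b) (fst y)" for y
  proof -
    have yb: "y \<noteq> b" "y \<noteq> linv b" using Eirr[OF e] by auto
    have yl: "fst y \<in> lk X E (fst b)" using sg e by (auto simp: lk_def simplicial_graph_def)
    hence ys: "fst y \<in> st X E (fst a)" using dom by (auto simp: dominates_def)
    show ?thesis
    proof (cases "y = a \<or> y = linv a")
      case True
      hence "?g y = [y]" by (auto simp: wh_letter_def)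
      thus ?thesis using comm_E[of E b y] e by simp
    next
      case False
      hence "fst y \<noteq> fst a" using same_fst[of a y] by auto
      hence eay: "E (fst a) (fst y)" using ys by (auto simp: st_def lk_def)
      define p where "p = (if linv y \<in> B then [linv b] else [])"
      define q where "q = (if y \<in> B then [b] else [])"
      have fy: "?f y = p @ [y] @ q" using yb by (simp add: wh_letter_def p_def q_def)
      have by1: "comm E [y] [b]" using comm_E[of E y b] Esym[OF e] by simp
      have yp: "comm E [y] p" using comm_inv[OF by1] by (simp add: p_def)
      have yq: "comm E [y] q" using by1 by (simp add: q_def)
      have "raag_eq E ((p @ [y]) @ q) (([y] @ p) @ q)"
        using req_cong[of E "p@[y]" "[y]@p" "[]" q] comm_sym[OF yp] by (simp add: comm_def)
      hence r1: "raag_eq E (p @ [y] @ q) ([y] @ p @ q)" by simp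
      have "comm E [a] (?f y)" using fcomm[OF eay] fa by simp
      hence "comm E [a] ([y] @ (p @ q))" using comm_cong[OF r1] fy by simp
      hence apq: "comm E [a] (p @ q)" using comm_cancel comm_E[of E a y] eay by blast
      have ay: "comm E [a] [y]" using comm_E[of E a y] eay by simp
      have gy: "?g y = map (rl b a) p @ [y] @ map (rl b a) q"
        using gf[OF yb] fy yb by (simp add: rl_def)
      show ?thesis
      proof (cases "linv y \<in> B")
        case T1: True
        show ?thesis
        proof (cases "y \<in> B")
          case True
          have gy2: "?g y = [linv a, y, a]" using gy T1 True by (simp add: p_def q_def rl_def)
          have "raag_eq E ([linv a] @ [y, a] @ []) ([linv a] @ [a, y] @ [])"
            using raag_eq.commute[of E y a "[linv a]" "[]"] Esym[OF eay] by simp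
          moreover have "raag_eq E ([] @ [linv a, linv (linv a)] @ [y]) ([] @ [y])"
            by (rule raag_eq.cancel)
          ultimately have "raag_eq E [y] (?g y)" using gy2 by simp (metis raag_eq.sym raag_eq.trans)
          thus ?thesis using comm_cong comm_E[of E b y] e by blast
        next
          case False
          have "comm E [a] [linv b]" using apq T1 False by (simp add: p_def q_def)
          hence "comm E [b] [a]" using comm_inv comm_sym by fastforce
          hence "comm E [b] [linv a]" using comm_inv by fastforce
          moreover have "?g y = [linv a] @ [y]" using gy T1 False by (simp add: p_def q_def rl_def)
          ultimately show ?thesis using comm_app comm_E[of E b y] e by fastforce
        qed
      next
        case F1: False
        show ?thesis
        proof (cases "y \<in> B")
          case True
          have "comm E [a] [b]" using apq F1 True by (simp add: p_def q_def)
          hence "comm E [b] [a]" using comm_sym by fastforce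
          moreover have "?g y = [y] @ [a]" using gy F1 True by (simp add: p_def q_def rl_def)
          ultimately show ?thesis using comm_app comm_E[of E b y] e by fastforce
        next
          case False
          have "?g y = [y]" using gy F1 False by (simp add: p_def q_def)
          thus ?thesis using comm_E[of E b y] e by simp
        qed
      qed
    qed
  qed
  have kx: "comm E (?g x) (?g y)" if e: "E (fst x) (fst y)" and xb: "x = b \<or> x = linv b" for x y
  proof -
    have e': "E (fst b) (fst y)" using e xb by auto
    show ?thesis using xb
    proof
      assume "x = b" thus ?thesis using kb[OF e'] gb by simp
    next
      assume x: "x = linv b"
      have "comm E (?g y) [b]" using kb[OF e'] comm_sym by blast
      hence "comm E (?g y) (winv [b])" by (rule comm_inv)
      thus ?thesis using x gb comm_sym by fastforce
    qed
  qed
  show ?thesis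
  proof (cases "x = b \<or> x = linv b")
    case True thus ?thesis using kx[OF e] by blast
  next
    case fx: False
    show ?thesis
    proof (cases "y = b \<or> y = linv b")
      case True thus ?thesis using kx[OF Esym[OF e]] comm_sym by blast
    next
      case False
      have "raag_eq E (?f x @ ?f y) (?f y @ ?f x)" using fcomm[OF e] by (simp add: comm_def)
      hence "raag_eq E (repl b a (?f x @ ?f y)) (repl b a (?f y @ ?f x))"
        by (rule repl_resp[OF sg dom])
      thus ?thesis using gf fx False by (simp add: comm_def repl_rl)
    qed
  qed
qed

lemma g_resp:
  fixes X :: "'v set" and a b :: "'v letter"
  assumes sg: "simplicial_graph X E" and wh2: "whitehead2 X E B b"
    and aX: "a \<in> letters X" and dom: "dominates X E a b"
    and aB: "a \<notin> B" and aB': "linv a \<notin> B"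
    and h: "raag_eq E w w'"
  shows "raag_eq E (wh ((B - {b}) \<union> {a}) a w) (wh ((B - {b}) \<union> {a}) a w')"
  unfolding wh_def
  apply (rule hom_resp[where F="wh_letter ((B - {b}) \<union> {a}) a"])
    apply (rule g_comm[OF sg wh2 aX dom aB aB'], assumption)
   apply (rule wh_letter_inv)
  by (rule h)


lemma conj_helper:
  assumes h1: "raag_eq E (c@x@winv c) (k@y@winv k)" and h2: "raag_eq E (m@y@winv m) z"
  shows "raag_eq E ((m@winv k@c) @ x @ winv (m@winv k@c)) z"
proof -
  have "raag_eq E ((m@winv k) @ (c@x@winv c) @ (k @ winv m)) ((m@winv k) @ (k@y@winv k) @ (k @ winv m))"
    by (rule req_cong[OF h1])
  moreover have "raag_eq E (m @ (winv k @ k) @ (y @ winv k @ k @ winv m)) (m @ [] @ (y @ winv k @ k @ winv m))"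
    by (rule req_cong[OF req_inv_l])
  moreover have "raag_eq E ((m @ y) @ (winv k @ k) @ winv m) ((m @ y) @ [] @ winv m)"
    by (rule req_cong[OF req_inv_l])
  ultimately show ?thesis using h2 by simp (metis raag_eq.trans)
qed

lemma winv_lists: "w \<in> lists (letters X) \<Longrightarrow> winv w \<in> lists (letters X)"
  by (induction w) (auto simp: letters_def linv_def mem_Times_iff)

lemma repl_lists: "a \<in> letters X \<Longrightarrow> w \<in> lists (letters X) \<Longrightarrow> repl b a w \<in> lists (letters X)"
  by (induction w) (auto simp: repl_def letters_def linv_def mem_Times_iff)

lemma wh_lists: "a \<in> letters X \<Longrightarrow> A \<subseteq> letters X \<Longrightarrow> w \<in> lists (letters X) \<Longrightarrow> wh A a w \<in> lists (letters X)"
  by (induction w) (auto simp: wh_def wh_letter_def letters_def linv_def mem_Times_iff)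

lemma repl_winv: "repl b a (winv w) = winv (repl b a w)"
  by (simp add: repl_rl winv_def rev_map rl_inv)

lemma wh_winv: "wh A a (winv w) = winv (wh A a w)"
  by (induction w) (simp_all add: wh_def wh_letter_inv)

lemma wh_app: "wh A a (p@q) = wh A a p @ wh A a q" by (simp add: wh_def)
lemma repl_app: "repl b a (p@q) = repl b a p @ repl b a q" by (simp add: repl_def)

lemma g_noB:
  assumes "fst b \<notin> fst ` set w" "a \<noteq> b" "a \<noteq> linv b" "a \<notin> B" "linv a \<notin> B"
  shows "wh ((B - {b}) \<union> {a}) a w = repl b a (wh B b w)"
  using assms
proof (induction w)
  case Nil then show ?case by (simp add: wh_def repl_def)
next
  case (Cons x w)
  have "x \<noteq> b" "x \<noteq> linv b" using Cons.prems(1) by auto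
  then show ?case using Cons g_letter[of x b a B] by (simp add: wh_def repl_app repl_rl)
qed

lemma ex_red:
  assumes "u \<in> lists (letters X)"
  shows "\<exists>w. graph_reduced X E w \<and> raag_eq E w u"
proof -
  let ?P = "\<lambda>w. w \<in> lists (letters X) \<and> raag_eq E w u"
  have "?P u" using assms raag_eq.refl by blast
  then obtain w where w: "?P w" "\<And>y. ?P y \<Longrightarrow> length w \<le> length y"
    using ex_has_least_nat[of ?P u length] by blast
  have "graph_reduced X E w" unfolding graph_reduced_def
  proof (intro conjI ballI impI)
    show "w \<in> lists (letters X)" using w by blast
  next
    fix w' assume "w' \<in> lists (letters X)" "raag_eq E w w'"
    thus "length w \<le> length w'" using w by (meson raag_eq.sym raag_eq.trans)
  qed
  thus ?thesis using w by blast
qed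

lemma conj_trans:
  assumes "raag_conj X E w w'" "raag_conj X E w u"
  shows "raag_conj X E w' u"
proof -
  obtain g where g: "g \<in> lists (letters X)" "raag_eq E (g @ w @ winv g) w'"
    using assms(1) by (auto simp: raag_conj_def)
  obtain h where h: "h \<in> lists (letters X)" "raag_eq E (h @ w @ winv h) u"
    using assms(2) by (auto simp: raag_conj_def)
  have "raag_eq E ((h @ winv g) @ w' @ winv (h @ winv g)) z"
    if "raag_eq E (h @ w @ winv h) z" for z
    using conj_helper[where E=E and c="[]" and x=w' and k="g" and y=w and m=h and z=z] g(2) that
    by (simp) (metis raag_eq.sym)
  moreover have "h @ winv g \<in> lists (letters X)" using g h winv_lists by auto
  ultimately show ?thesis using h unfolding raag_conj_def by blast
qed

lemma ex_cred:
  assumes "u \<in> lists (letters X)"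
  shows "\<exists>w. cyc_reduced X E w \<and> raag_conj X E w u"
proof -
  let ?P = "\<lambda>w. w \<in> lists (letters X) \<and> raag_conj X E w u"
  have "raag_conj X E u u" unfolding raag_conj_def using raag_eq.refl[of E u]
    by (intro bexI[of _ "[]"]) auto
  hence "?P u" using assms by blast
  then obtain w where w: "?P w" "\<And>y. ?P y \<Longrightarrow> length w \<le> length y"
    using ex_has_least_nat[of ?P u length] by blast
  have "cyc_reduced X E w" unfolding cyc_reduced_def
    using w conj_trans by blast
  thus ?thesis using w by blast
qed

theorem mainTheorem17:
  fixes X :: "'v set" and E :: "'v \<Rightarrow> 'v \<Rightarrow> bool"
    and B :: "'v letter set" and a b :: "'v letter"
  assumes "simplicial_graph X E"
    and "whitehead2 X E B b"
    and "a \<in> letters X"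
    and "dominates X E a b"
    and "a \<notin> B" and "linv a \<notin> B"
  shows "(\<forall>u \<in> lists (letters X). \<forall>v.
            fst b \<notin> supp_elem X E u \<longrightarrow> graph_reduced X E v \<longrightarrow>
            raag_eq E v (wh B b u) \<longrightarrow>
            raag_eq E (repl b a v) (wh ((B - {b}) \<union> {a}) a u))
       \<and> (\<forall>u \<in> lists (letters X). \<forall>v.
            fst b \<notin> supp_conj X E u \<longrightarrow> cyc_reduced X E v \<longrightarrow>
            raag_conj X E v (wh B b u) \<longrightarrow>
            raag_conj X E (repl b a v) (wh ((B - {b}) \<union> {a}) a u))"
proof -
  note sg = assms(1) and wh2 = assms(2) and aX = assms(3) and dom = assms(4)
    and aB = assms(5) and aB' = assms(6)
  let ?B' = "(B - {b}) \<union> {a}"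
  have bB: "b \<in> B" and BX: "B \<subseteq> letters X" and bB': "linv b \<notin> B"
    and aut: "is_raag_aut X E (wh B b)" using wh2 by (auto simp: whitehead2_def)
  have ab: "a \<noteq> b" "a \<noteq> linv b" using aB bB aB' by auto
  have Fresp: "\<And>w1 w2. w1 \<in> lists (letters X) \<Longrightarrow> w2 \<in> lists (letters X) \<Longrightarrow>
     raag_eq E w1 w2 \<Longrightarrow> raag_eq E (wh B b w1) (wh B b w2)"
    using aut unfolding is_raag_aut_def by blast
  have bX: "b \<in> letters X" using bB BX by auto
  have P1: "raag_eq E (repl b a v) (wh ?B' a u)"
    if u: "u \<in> lists (letters X)" and sb: "fst b \<notin> supp_elem X E u"
      and v: "raag_eq E v (wh B b u)" for u v
  proof -
    define w where "w = (SOME w. graph_reduced X E w \<and> raag_eq E w u)"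
    have w: "graph_reduced X E w \<and> raag_eq E w u"
      unfolding w_def by (rule someI_ex[OF ex_red[OF u]])
    have wl: "w \<in> lists (letters X)" using w by (simp add: graph_reduced_def)
    have nb: "fst b \<notin> fst ` set w" using sb by (simp add: supp_elem_def w_def)
    have "raag_eq E (repl b a v) (repl b a (wh B b u))" by (rule repl_resp[OF sg dom v])
    moreover have "raag_eq E (repl b a (wh B b u)) (repl b a (wh B b w))"
      by (rule repl_resp[OF sg dom Fresp[OF u wl raag_eq.sym]]) (use w in blast)
    moreover have "repl b a (wh B b w) = wh ?B' a w" using g_noB[OF nb ab aB aB'] by simp
    moreover have "raag_eq E (wh ?B' a w) (wh ?B' a u)"
      by (rule g_resp[OF sg wh2 aX dom aB aB']) (use w in blast)
    ultimately show ?thesis by (metis raag_eq.trans)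
  qed
  have P2: "raag_conj X E (repl b a v) (wh ?B' a u)"
    if u: "u \<in> lists (letters X)" and sb: "fst b \<notin> supp_conj X E u"
      and v: "raag_conj X E v (wh B b u)" for u v
  proof -
    define w where "w = (SOME w. cyc_reduced X E w \<and> raag_conj X E w u)"
    have w: "cyc_reduced X E w \<and> raag_conj X E w u"
      unfolding w_def by (rule someI_ex[OF ex_cred[OF u]])
    have wl: "w \<in> lists (letters X)" using w by (simp add: cyc_reduced_def)
    have nb: "fst b \<notin> fst ` set w" using sb by (simp add: supp_conj_def w_def)
    obtain g0 where g0: "g0 \<in> lists (letters X)" "raag_eq E (g0 @ w @ winv g0) u"
      using w by (auto simp: raag_conj_def)
    obtain h where h: "h \<in> lists (letters X)" "raag_eq E (h @ v @ winv h) (wh B b u)"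
      using v by (auto simp: raag_conj_def)
    let ?R = "repl b a" and ?F = "wh B b" and ?G = "wh ?B' a"
    have gl: "g0 @ w @ winv g0 \<in> lists (letters X)" using g0 wl winv_lists by auto
    have "raag_eq E (?R (h @ v @ winv h)) (?R (?F u))" by (rule repl_resp[OF sg dom h(2)])
    moreover have "raag_eq E (?R (?F u)) (?R (?F (g0 @ w @ winv g0)))"
      by (rule repl_resp[OF sg dom Fresp[OF u gl raag_eq.sym[OF g0(2)]]])
    ultimately have "raag_eq E (?R (h @ v @ winv h)) (?R (?F (g0 @ w @ winv g0)))"
      by (rule raag_eq.trans)
    hence c1: "raag_eq E (?R h @ ?R v @ winv (?R h)) (?R (?F g0) @ ?G w @ winv (?R (?F g0)))"
      using g_noB[OF nb ab aB aB'] by (simp add: wh_app repl_app wh_winv repl_winv)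
    have "raag_eq E (?G (g0 @ w @ winv g0)) (?G u)" by (rule g_resp[OF sg wh2 aX dom aB aB' g0(2)])
    hence c2: "raag_eq E (?G g0 @ ?G w @ winv (?G g0)) (?G u)" by (simp add: wh_app wh_winv)
    have fin: "raag_eq E ((?G g0 @ winv (?R (?F g0)) @ ?R h) @ ?R v @ winv (?G g0 @ winv (?R (?F g0)) @ ?R h)) (?G u)"
      by (rule conj_helper[OF c1 c2])
    have B'X: "?B' \<subseteq> letters X" using BX aX by auto
    have "?G g0 @ winv (?R (?F g0)) @ ?R h \<in> lists (letters X)"
      using wh_lists[OF aX B'X g0(1)] winv_lists[OF repl_lists[OF aX wh_lists[OF bX BX g0(1)]]]
        repl_lists[OF aX h(1)] by auto
    thus ?thesis using fin unfolding raag_conj_def by blast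
  qed
  show ?thesis using P1 P2 by blast
qed

end
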